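(* Let $d\ge 1$ and $a=(a_1,\dots,a_d)\in\mathbb{R}^d$. Then $a$ is a Nuij sequence if and only if the polynomial $$q_a(z):=z^d+\sum_{k=1}^d a_k (z^d)^{(k)} = z^d+\sum_{k=1}^d a_k\frac{d!}{(d-k)!}z^{d-k}$$ is hyperbolic.
   Context: A polynomial $p\in\mathbb{R}[z]$ is called hyperbolic if all its roots are real. A sequence $a=(a_1,\dots,a_d)\in\mathbb{R}^d$ is called a Nuij sequence if for every hyperbolic polynomial $p\in\mathbb{R}[z]$ of degree $d$, the polynomial $p_a(z,s):=p(z)+\sum_{k=1}^d a_k s^k p^{(k)}(z)\in\mathbb{R}[z]$ is hyperbolic for every $s\in\mathbb{R}$. Here $p^{(k)}$ denotes the $k$-th derivative with respect to $z$. *)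

theory Defs
  imports "HOL-Computational_Algebra.Polynomial" Complex_Main
begin

definition hyperbolic :: "real poly \<Rightarrow> bool" where
  "hyperbolic p \<longleftrightarrow> (\<forall>z::complex. poly (map_poly complex_of_real p) z = 0 \<longrightarrow> z \<in> \<real>)"

definition nuij_poly :: "nat \<Rightarrow> (nat \<Rightarrow> real) \<Rightarrow> real poly \<Rightarrow> real \<Rightarrow> real poly" where
  "nuij_poly d a p s = p + (\<Sum>k=1..d. smult (a k * s ^ k) ((pderiv ^^ k) p))"

definition nuij_sequence :: "nat \<Rightarrow> (nat \<Rightarrow> real) \<Rightarrow> bool" where
  "nuij_sequence d a \<longleftrightarrow>
     (\<forall>p. degree p = d \<longrightarrow> hyperbolic p \<longrightarrow> (\<forall>s::real. hyperbolic (nuij_poly d a p s)))"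

end

theory Submission imports Defs "HOL-Analysis.Convex" "HOL-Computational_Algebra.Fundamental_Theorem_Algebra"
begin

lemma pderiv_prod_lin:
  fixes z :: complex and n :: nat
  assumes "\<forall>i<n. r i \<noteq> z"
  shows "poly (pderiv (\<Prod>i<n. [:-r i,1:])) z = poly (\<Prod>i<n. [:-r i,1:]) z * (\<Sum>i<n. 1/(z - r i))"
  using assms
proof (induction n)
  case 0 then show ?case by simp
next
  case (Suc n)
  then have IH: "poly (pderiv (\<Prod>i<n. [:-r i,1:])) z = poly (\<Prod>i<n. [:-r i,1:]) z * (\<Sum>i<n. 1/(z - r i))"
    by auto
  have ne: "z - r n \<noteq> 0" using Suc.prems by auto
  define A where "A = (\<Prod>i<n. [:-r i,1:])"
  have d1: "pderiv [:-r n, 1:] = 1" by (simp add: pderiv_pCons)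
  have "poly (pderiv (\<Prod>i<Suc n. [:-r i,1:])) z = poly (pderiv (A * [:-r n,1:])) z"
    by (simp add: A_def)
  also have "\<dots> = poly A z + (z - r n) * (poly A z * (\<Sum>i<n. 1/(z - r i)))"
    unfolding pderiv_mult d1 using IH by (simp add: A_def algebra_simps)
  also have "\<dots> = poly A z * (z - r n) * ((\<Sum>i<n. 1/(z - r i)) + 1/(z - r n))"
    using ne by (simp add: field_simps)
  also have "\<dots> = poly (\<Prod>i<Suc n. [:-r i,1:]) z * (\<Sum>i<Suc n. 1/(z - r i))"
    by (simp add: A_def algebra_simps)
  finally show ?case .
qed

lemma sq_sum_le: "(\<Sum>i<e. f i)\<^sup>2 \<le> real e * (\<Sum>i<e. (f i)\<^sup>2)" for f :: "nat \<Rightarrow> real"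
  using sum_squared_le_sum_of_squares[of f "{..<e}"] by (simp add: mult.commute)

lemma inv_im:
  fixes w :: complex assumes "w \<noteq> 0"
  shows "t * ((Re (1/w))\<^sup>2 + (Im (1/w))\<^sup>2) + Im (1/w) = (t - Im w) / ((Re w)\<^sup>2 + (Im w)\<^sup>2)"
proof -
  define D where "D = (Re w)\<^sup>2 + (Im w)\<^sup>2"
  have D0: "D > 0" using assms unfolding D_def
    by (metis complex_eq_iff zero_complex.sel sum_power2_gt_zero_iff)
  have e1: "Re (1/w) = Re w / D" "Im (1/w) = - Im w / D"
    by (simp_all add: D_def Re_divide Im_divide power2_eq_square)
  have "(Re (1/w))\<^sup>2 + (Im (1/w))\<^sup>2 = ((Re w)\<^sup>2 + (Im w)\<^sup>2) / D\<^sup>2"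
    unfolding e1 by (simp add: power_divide add_divide_distrib)
  also have "\<dots> = 1 / D" using D0 by (simp only: D_def[symmetric]) (simp add: power2_eq_square)
  finally have "(Re (1/w))\<^sup>2 + (Im (1/w))\<^sup>2 = 1 / D" .
  then show ?thesis using e1(2) by (simp add: diff_divide_distrib D_def)
qed

lemma laguerre:
  fixes h :: "complex poly" and N :: nat and \<alpha> z :: complex
  assumes h0: "h \<noteq> 0" and dg: "degree h \<le> N" and N1: "N \<ge> 1"
    and rt: "\<forall>w. poly h w = 0 \<longrightarrow> Im w > 0" and al: "Im \<alpha> \<le> 0" and zi: "Im z \<le> 0"
  shows "poly (smult (of_nat N) h - [:-\<alpha>,1:] * pderiv h) z \<noteq> 0"
proof
  assume H: "poly (smult (of_nat N) h - [:-\<alpha>,1:] * pderiv h) z = 0"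
  obtain r where hr: "smult (lead_coeff h) (\<Prod>i<degree h. [:-r i, 1:]) = h"
    using complex_poly_decompose' by blast
  define e where "e = degree h"
  define P where "P = (\<Prod>i<e. [:-r i, 1:])"
  have hP: "h = smult (lead_coeff h) P" using hr by (simp add: P_def e_def)
  have c0: "lead_coeff h \<noteq> 0" using h0 by simp
  have rootr: "Im (r i) > 0" if "i < e" for i
  proof -
    have "poly P (r i) = 0" unfolding P_def poly_prod
      using that by (intro prod_zero) auto
    then have "poly h (r i) = 0" by (subst hP) simp
    then show ?thesis using rt by blast
  qed
  have rz: "\<forall>i<e. r i \<noteq> z" using rootr zi by force
  have hz: "poly h z \<noteq> 0" using rt zi by force
  define S where "S = (\<Sum>i<e. 1/(z - r i))"
  have dh: "poly (pderiv h) z = poly h z * S"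
    apply (subst (1 2) hP)
    using pderiv_prod_lin[OF rz] by (simp add: pderiv_smult P_def S_def)
  have "of_nat N * poly h z - (z - \<alpha>) * (poly h z * S) = 0" using H dh by (simp add: algebra_simps)
  then have "(of_nat N - (z - \<alpha>) * S) * poly h z = 0" by (simp add: algebra_simps)
  then have NS: "of_nat N = (z - \<alpha>) * S" using hz by simp
  have za: "z \<noteq> \<alpha>" using NS N1 by auto
  define v where "v i = 1/(z - r i)" for i
  define u where "u = 1/(z - \<alpha>)"
  have Su: "S = of_nat N * u" using NS za by (simp add: u_def field_simps)
  define y where "y = Im z"
  have vpos: "y * ((Re (v i))\<^sup>2 + (Im (v i))\<^sup>2) + Im (v i) > 0" if "i < e" for i
  proof -
    have w0: "z - r i \<noteq> 0" using rz that by auto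
    have D0: "(Re (z - r i))\<^sup>2 + (Im (z - r i))\<^sup>2 > 0" using w0
      by (metis complex_eq_iff zero_complex.sel sum_power2_gt_zero_iff)
    show ?thesis unfolding v_def inv_im[OF w0] using rootr[OF that] D0 by (simp add: y_def)
  qed
  have uneg: "y * ((Re u)\<^sup>2 + (Im u)\<^sup>2) + Im u \<le> 0"
  proof -
    have w0: "z - \<alpha> \<noteq> 0" using za by auto
    have D0: "(Re (z - \<alpha>))\<^sup>2 + (Im (z - \<alpha>))\<^sup>2 > 0" using w0
      by (metis complex_eq_iff zero_complex.sel sum_power2_gt_zero_iff)
    show ?thesis unfolding u_def inv_im[OF w0] using al D0 by (simp add: y_def divide_nonpos_pos)
  qed
  have e1: "e \<ge> 1"
  proof (rule ccontr)
    assume "\<not> e \<ge> 1" then have "e = 0" by simp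
    then have "S = 0" by (simp add: S_def)
    then have "u = 0" using Su N1 by simp
    then show False using za by (simp add: u_def)
  qed
  define Q where "Q = (\<Sum>i<e. (Re (v i))\<^sup>2 + (Im (v i))\<^sup>2)"
  have ReS: "(\<Sum>i<e. Re (v i)) = real N * Re u" using Su by (simp add: S_def v_def[symmetric] Re_sum[symmetric])
  have ImS: "(\<Sum>i<e. Im (v i)) = real N * Im u" using Su by (simp add: S_def v_def[symmetric] Im_sum[symmetric])
  have sumpos: "y * Q + (\<Sum>i<e. Im (v i)) > 0"
  proof -
    have "(\<Sum>i<e. y * ((Re (v i))\<^sup>2 + (Im (v i))\<^sup>2) + Im (v i)) > 0"
      using e1 vpos by (intro sum_pos) (auto simp: lessThan_empty_iff)
    then show ?thesis by (simp add: Q_def sum.distrib sum_distrib_left[symmetric])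
  qed
  have cs: "(\<Sum>i<e. Re (v i))\<^sup>2 + (\<Sum>i<e. Im (v i))\<^sup>2 \<le> real N * Q"
  proof -
    have "(\<Sum>i<e. Re (v i))\<^sup>2 + (\<Sum>i<e. Im (v i))\<^sup>2 \<le> real e * Q"
      using sq_sum_le[of "\<lambda>i. Re (v i)" e] sq_sum_le[of "\<lambda>i. Im (v i)" e]
      by (simp add: Q_def sum.distrib distrib_left)
    also have "\<dots> \<le> real N * Q"
      using dg by (intro mult_right_mono) (auto simp: e_def Q_def intro: sum_nonneg)
    finally show ?thesis .
  qed
  have yle: "y \<le> 0" using zi by (simp add: y_def)
  have Npos: "real N > 0" using N1 by simp
  have A: "y * (real N * Q) + real N * (real N * Im u) > 0"
    using sumpos ImS Npos by (metis mult_pos_pos distrib_left mult.left_commute mult.commute)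
  have B: "y * ((real N * Re u)\<^sup>2 + (real N * Im u)\<^sup>2) \<ge> y * (real N * Q)"
    using cs ReS ImS yle by (metis mult_left_mono_neg)
  have C: "y * ((real N * Re u)\<^sup>2 + (real N * Im u)\<^sup>2) + real N * (real N * Im u) \<le> 0"
  proof -
    have "(real N)\<^sup>2 * (y * ((Re u)\<^sup>2 + (Im u)\<^sup>2) + Im u) \<le> 0"
      using uneg by (simp add: mult_nonneg_nonpos)
    then show ?thesis by (simp add: power2_eq_square algebra_simps)
  qed
  show False using A B C by linarith
qed

definition apol :: "nat \<Rightarrow> complex poly \<Rightarrow> complex poly \<Rightarrow> complex poly" where
  "apol n p h = (\<Sum>m\<le>n. smult ((-1)^m) ((pderiv^^m) p * (pderiv^^(n-m)) h))"

lemma higher_pderiv_zero: "degree p < k \<Longrightarrow> (pderiv^^k) p = 0"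
  by (rule poly_eqI) (simp add: coeff_higher_pderiv coeff_eq_0)

lemma higher_pderiv_Suc: "(pderiv^^(Suc k)) p = pderiv ((pderiv^^k) p)"
  by simp

lemma higher_pderiv_diff: "(pderiv^^k) (p - q) = (pderiv^^k) p - (pderiv^^k) (q :: complex poly)"
  by (induction k) (simp_all add: pderiv_diff)

lemma apol_deriv:
  "pderiv (apol n p h) = p * (pderiv^^(Suc n)) h - smult ((-1)^(Suc n)) ((pderiv^^(Suc n)) p * h)"
proof -
  define T where "T m = smult ((-1)^m) ((pderiv^^m) p * (pderiv^^(Suc n - m)) h)" for m
  have "pderiv (apol n p h) = (\<Sum>m\<le>n. pderiv (smult ((-1)^m) ((pderiv^^m) p * (pderiv^^(n-m)) h)))"
    unfolding apol_def using higher_pderiv_sum[of 1] by simp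
  also have "\<dots> = (\<Sum>m<Suc n. T m - T (Suc m))"
  proof (rule sum.cong)
    fix m assume "m \<in> {..<Suc n}"
    then have mn: "m \<le> n" by simp
    then have e1: "Suc n - m = Suc (n - m)" and e2: "Suc n - Suc m = n - m" by auto
    show "pderiv (smult ((-1)^m) ((pderiv^^m) p * (pderiv^^(n-m)) h)) = T m - T (Suc m)"
      unfolding T_def e1 e2 by (simp add: pderiv_smult pderiv_mult algebra_simps smult_add_right)
  qed (simp add: lessThan_Suc_atMost)
  also have "\<dots> = T 0 - T (Suc n)" by (rule sum_lessThan_telescope')
  finally show ?thesis by (simp add: T_def)
qed

lemma apol_const:
  assumes "degree p \<le> n" "degree h \<le> n"
  shows "poly (apol n p h) x = poly (apol n p h) y"
proof -
  have z1: "(pderiv^^(Suc n)) h = 0" "(pderiv^^(Suc n)) p = 0"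
    using assms by (simp_all only: higher_pderiv_zero less_Suc_eq_le)
  have "pderiv (apol n p h) = 0" unfolding apol_deriv z1 by simp
  then have "degree (apol n p h) = 0" by (simp add: pderiv_eq_0_iff)
  then show ?thesis by (auto elim!: degree_eq_zeroE)
qed

lemma lin_higher_pderiv:
  assumes L: "pderiv L = 1"
  shows "(pderiv^^(Suc k)) (L * f) = L * (pderiv^^(Suc k)) f + smult (of_nat (Suc k)) ((pderiv^^k) (f :: complex poly))"
proof (induction k)
  case 0 then show ?case by (simp add: pderiv_mult L)
next
  case (Suc k)
  have "(pderiv^^(Suc (Suc k))) (L * f) = pderiv ((pderiv^^(Suc k)) (L * f))" by simp
  also have "\<dots> = L * (pderiv^^(Suc (Suc k))) f + (pderiv^^(Suc k)) f + smult (of_nat (Suc k)) ((pderiv^^(Suc k)) f)"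
    unfolding Suc by (simp add: pderiv_mult pderiv_add pderiv_smult L)
  also have "\<dots> = L * (pderiv^^(Suc (Suc k))) f + smult (of_nat (Suc (Suc k))) ((pderiv^^(Suc k)) f)"
  proof -
    have "smult (of_nat (Suc (Suc k))) ((pderiv^^(Suc k)) f) = (pderiv^^(Suc k)) f + smult (of_nat (Suc k)) ((pderiv^^(Suc k)) f)"
      by (simp only: of_nat_Suc[of "Suc k"] smult_add_left) simp
    then show ?thesis by (simp only: add.assoc)
  qed
  finally show ?case .
qed

lemma lin_higher_pderiv_poly:
  assumes L: "pderiv L = 1" "poly L \<alpha> = 0"
  shows "poly ((pderiv^^k) (L * f)) \<alpha> = of_nat k * poly ((pderiv^^(k-1)) (f :: complex poly)) \<alpha>"
proof (cases k)
  case 0 then show ?thesis using L by simp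
next
  case (Suc j) then show ?thesis using L by (simp only: lin_higher_pderiv[OF L(1)]) simp
qed

lemma polar_higher_pderiv_poly:
  assumes L: "pderiv L = 1" "poly L \<alpha> = 0"
  shows "poly ((pderiv^^j) (smult (of_nat N) h - L * pderiv h)) \<alpha> = (of_nat N - of_nat j) * poly ((pderiv^^j) (h :: complex poly)) \<alpha>"
proof -
  have "poly ((pderiv^^j) (L * pderiv h)) \<alpha> = of_nat j * poly ((pderiv^^j) h) \<alpha>"
  proof (cases j)
    case 0 then show ?thesis using L by simp
  next
    case (Suc i)
    have "(pderiv^^i) (pderiv h) = (pderiv^^j) h" using Suc by (simp add: funpow_Suc_right del: funpow.simps)
    then show ?thesis using lin_higher_pderiv_poly[OF L, of j "pderiv h"] Suc by simp
  qed
  then show ?thesis by (simp add: higher_pderiv_diff higher_pderiv_smult algebra_simps)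
qed

lemma apol_rec:
  assumes L: "pderiv L = 1" "poly L \<alpha> = 0"
  shows "poly (apol (Suc n) (L * p1) h) \<alpha> = - poly (apol n p1 (smult (of_nat (Suc n)) h - L * pderiv h)) \<alpha>"
proof -
  have "poly (apol (Suc n) (L * p1) h) \<alpha> =
    (\<Sum>m\<le>Suc n. (-1)^m * (of_nat m * poly ((pderiv^^(m-1)) p1) \<alpha>) * poly ((pderiv^^(Suc n - m)) h) \<alpha>)"
    unfolding apol_def poly_sum poly_smult poly_mult lin_higher_pderiv_poly[OF L] by (simp add: mult.assoc)
  also have "\<dots> = (\<Sum>i\<le>n. (-1)^(Suc i) * (of_nat (Suc i) * poly ((pderiv^^i) p1) \<alpha>) * poly ((pderiv^^(n - i)) h) \<alpha>)"
    by (subst sum.atMost_Suc_shift) simp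
  also have "\<dots> = - (\<Sum>i\<le>n. (-1)^i * poly ((pderiv^^i) p1) \<alpha> * ((of_nat (Suc n) - of_nat (n - i)) * poly ((pderiv^^(n - i)) h) \<alpha>))"
    unfolding sum_negf[symmetric]
  proof (rule sum.cong)
    fix i assume "i \<in> {..n}"
    then have "of_nat (Suc n) - of_nat (n - i) = (of_nat (Suc i) :: complex)" by (simp add: of_nat_diff)
    then show "(-1)^(Suc i) * (of_nat (Suc i) * poly ((pderiv^^i) p1) \<alpha>) * poly ((pderiv^^(n - i)) h) \<alpha> =
      - ((-1)^i * poly ((pderiv^^i) p1) \<alpha> * ((of_nat (Suc n) - of_nat (n - i)) * poly ((pderiv^^(n - i)) h) \<alpha>))"
      by simp
  qed simp
  also have "\<dots> = - poly (apol n p1 (smult (of_nat (Suc n)) h - L * pderiv h)) \<alpha>"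
    unfolding apol_def poly_sum poly_smult poly_mult polar_higher_pderiv_poly[OF L] by (simp add: mult.assoc)
  finally show ?thesis .
qed

lemma polar_degree:
  fixes h :: "complex poly"
  assumes "degree h \<le> Suc n"
  shows "degree (smult (of_nat (Suc n)) h - [:-\<alpha>,1:] * pderiv h) \<le> n"
proof (rule degree_le, intro allI impI)
  fix i assume i: "i > n"
  have c1: "coeff ([:-\<alpha>,1:] * pderiv h) i = - \<alpha> * coeff (pderiv h) i + coeff (pderiv h) (i - 1)"
    using i by (cases i) (auto simp: coeff_pCons)
  have c2: "coeff (pderiv h) i = 0"
    using assms i by (intro coeff_eq_0) (simp add: degree_pderiv)
  have c3: "coeff (pderiv h) (i - 1) = of_nat i * coeff h i"
    using i by (cases i) (auto simp: coeff_pderiv)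
  show "coeff (smult (of_nat (Suc n)) h - [:-\<alpha>,1:] * pderiv h) i = 0"
  proof (cases "i = Suc n")
    case True then show ?thesis using c1 c2 c3 by simp
  next
    case False
    then have "coeff h i = 0" using i assms by (intro coeff_eq_0) auto
    then show ?thesis using c1 c2 c3 by simp
  qed
qed

lemma grace:
  fixes p h :: "complex poly"
  assumes "p \<noteq> 0" "degree p = n" "h \<noteq> 0" "degree h \<le> n"
    "\<forall>w. poly p w = 0 \<longrightarrow> Im w \<le> 0" "\<forall>w. poly h w = 0 \<longrightarrow> Im w > 0"
  shows "poly (apol n p h) x \<noteq> 0"
  using assms
proof (induction n arbitrary: p h x)
  case 0
  then have "poly p x \<noteq> 0" "poly h x \<noteq> 0"
    by (auto elim!: degree_eq_zeroE)
  then show ?case by (simp add: apol_def)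
next
  case (Suc n)
  have "\<not> constant (poly p)" using Suc.prems(2) by (simp add: constant_degree)
  then obtain \<alpha> where ra: "poly p \<alpha> = 0" using fundamental_theorem_of_algebra by blast
  then obtain p1 where pp: "p = [:-\<alpha>,1:] * p1" by (metis poly_eq_0_iff_dvd dvdE)
  have p10: "p1 \<noteq> 0" using pp Suc.prems(1) by auto
  have "degree ([:-\<alpha>,1:] * p1) = degree [:-\<alpha>,1:] + degree p1"
    by (rule degree_mult_eq) (use p10 in auto)
  then have dp1: "degree p1 = n" using Suc.prems(2) unfolding pp[symmetric] by simp
  have rp1: "\<forall>w. poly p1 w = 0 \<longrightarrow> Im w \<le> 0" using Suc.prems(5) pp by auto
  have ia: "Im \<alpha> \<le> 0" using Suc.prems(5) ra by blast
  define h1 where "h1 = smult (of_nat (Suc n)) h - [:-\<alpha>,1:] * pderiv h"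
  have lag: "poly h1 z \<noteq> 0" if "Im z \<le> 0" for z
    unfolding h1_def using laguerre[OF Suc.prems(3,4) _ Suc.prems(6) ia that] by simp
  have h10: "h1 \<noteq> 0" using lag[of 0] by auto
  have dh1: "degree h1 \<le> n" unfolding h1_def using Suc.prems(4) by (rule polar_degree)
  have rh1: "\<forall>w. poly h1 w = 0 \<longrightarrow> Im w > 0" using lag by force
  have "poly (apol n p1 h1) \<alpha> \<noteq> 0" using Suc.IH[OF p10 dp1 h10 dh1 rp1 rh1] .
  then have "poly (apol (Suc n) p h) \<alpha> \<noteq> 0"
    unfolding pp h1_def by (subst apol_rec) (auto simp: pderiv_pCons)
  moreover have "poly (apol (Suc n) p h) x = poly (apol (Suc n) p h) \<alpha>"
    using Suc.prems(2,4) by (intro apol_const) auto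
  ultimately show ?case by simp
qed

lemma higher_pderiv_monom1:
  "(pderiv^^k) (monom (1::'a::idom) d) = monom (of_nat (\<Prod>i<k. d - i)) (d - k)"
proof (induction k)
  case 0 then show ?case by simp
next
  case (Suc k)
  then show ?case by (simp add: pderiv_monom of_nat_mult mult.commute diff_Suc)
qed

lemma monom_eval0: "poly ((pderiv^^j) (monom (1::complex) d)) 0 = (if j = d then fact d else 0)"
  by (simp add: poly_0_coeff_0 coeff_higher_pderiv pochhammer_fact)

lemma comp_higher_pderiv:
  "(pderiv^^j) (pcompose Q [:z0, -1:]) = smult ((-1)^j) (pcompose ((pderiv^^j) Q) [:z0, -1:])"
  for Q :: "complex poly"
proof (induction j)
  case 0 then show ?case by simp
next
  case (Suc j)
  have "(pderiv^^(Suc j)) (pcompose Q [:z0, -1:]) = pderiv ((pderiv^^j) (pcompose Q [:z0, -1:]))" by simp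
  also have "\<dots> = smult ((-1)^(Suc j)) (pcompose ((pderiv^^(Suc j)) Q) [:z0, -1:])"
    unfolding Suc by (simp add: pderiv_smult pderiv_pcompose pderiv_pCons)
  finally show ?case .
qed

lemma Q_eval0:
  fixes b :: "nat \<Rightarrow> complex"
  assumes "j \<le> d"
  shows "poly ((pderiv^^j) (monom 1 d + (\<Sum>k=1..d. smult (b k) ((pderiv^^k) (monom 1 d))))) 0
    = fact d * (if j = d then 1 else b (d - j))"
proof -
  have "poly ((pderiv^^j) (monom 1 d + (\<Sum>k=1..d. smult (b k) ((pderiv^^k) (monom 1 d))))) 0
     = poly ((pderiv^^j) (monom 1 d)) 0 + (\<Sum>k=1..d. b k * poly ((pderiv^^(j+k)) (monom 1 d)) 0)"
    by (simp add: higher_pderiv_add higher_pderiv_sum higher_pderiv_smult poly_sum funpow_add)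
  also have "\<dots> = (if j = d then fact d else 0) + (\<Sum>k=1..d. (if k = d - j then b k * fact d else 0))"
    unfolding monom_eval0 using assms by (intro arg_cong2[where f="(+)"] sum.cong) auto
  also have "\<dots> = fact d * (if j = d then 1 else b (d - j))"
    using assms by (cases "j = d") (auto simp: sum.delta mult.commute)
  finally show ?thesis .
qed

lemma core:
  fixes d :: nat and b :: "nat \<Rightarrow> complex" and P :: "complex poly"
  assumes P0: "P \<noteq> 0" and dP: "degree P = d"
    and rP: "\<forall>w. poly P w = 0 \<longrightarrow> Im w = 0"
    and rQ: "\<forall>w. poly (monom 1 d + (\<Sum>k=1..d. smult (b k) ((pderiv^^k) (monom 1 d)))) w = 0 \<longrightarrow> Im w = 0"
    and z0: "Im z0 > 0"
  shows "poly (P + (\<Sum>k=1..d. smult (b k) ((pderiv^^k) P))) z0 \<noteq> 0"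
proof
  assume N0: "poly (P + (\<Sum>k=1..d. smult (b k) ((pderiv^^k) P))) z0 = 0"
  define Q where "Q = monom 1 d + (\<Sum>k=1..d. smult (b k) ((pderiv^^k) (monom (1::complex) d)))"
  define h where "h = pcompose Q [:z0, -1:]"
  have ph: "poly h w = poly Q (z0 - w)" for w by (simp add: h_def poly_pcompose)
  have Qi: "poly Q \<i> \<noteq> 0" using rQ unfolding Q_def[symmetric] by force
  have h0: "h \<noteq> 0" using ph[of "z0 - \<i>"] Qi by auto
  have dQ: "degree Q \<le> d" unfolding Q_def
    by (intro degree_add_le degree_sum_le order.trans[OF degree_smult_le])
       (auto simp: degree_higher_pderiv degree_monom_eq)
  have dh: "degree h \<le> d" using dQ by (simp add: h_def degree_pcompose)
  have rh: "\<forall>w. poly h w = 0 \<longrightarrow> Im w > 0"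
  proof (intro allI impI)
    fix w assume "poly h w = 0"
    then have "Im (z0 - w) = 0" using rQ ph unfolding Q_def by metis
    then show "Im w > 0" using z0 by simp
  qed
  have rP': "\<forall>w. poly P w = 0 \<longrightarrow> Im w \<le> 0" using rP by auto
  have G: "poly (apol d P h) z0 \<noteq> 0" using grace[OF P0 dP h0 dh rP' rh] .
  have "poly (apol d P h) z0 = (\<Sum>m\<le>d. (-1)^m * poly ((pderiv^^m) P) z0 * ((-1)^(d-m) * poly ((pderiv^^(d-m)) Q) 0))"
    unfolding apol_def h_def by (simp add: poly_sum comp_higher_pderiv poly_pcompose mult_ac)
  also have "\<dots> = (\<Sum>m\<le>d. (-1)^d * fact d * ((if m = 0 then 1 else b m) * poly ((pderiv^^m) P) z0))"
  proof (rule sum.cong)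
    fix m assume m: "m \<in> {..d}"
    then have "poly ((pderiv^^(d-m)) Q) 0 = fact d * (if d - m = d then 1 else b (d - (d - m)))"
      unfolding Q_def by (intro Q_eval0) auto
    moreover have "(-1::complex)^m * (-1)^(d-m) = (-1)^d" using m by (simp add: power_add[symmetric])
    moreover have "d - m = d \<longleftrightarrow> m = 0" "d - (d - m) = m" using m by auto
    ultimately show "(-1)^m * poly ((pderiv^^m) P) z0 * ((-1)^(d-m) * poly ((pderiv^^(d-m)) Q) 0) =
       (-1)^d * fact d * ((if m = 0 then 1 else b m) * poly ((pderiv^^m) P) z0)"
      by (simp add: algebra_simps)
  qed simp
  also have "\<dots> = (-1)^d * fact d * (\<Sum>m\<le>d. (if m = 0 then 1 else b m) * poly ((pderiv^^m) P) z0)"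
    by (simp add: sum_distrib_left)
  also have "(\<Sum>m\<le>d. (if m = 0 then 1 else b m) * poly ((pderiv^^m) P) z0)
      = poly (P + (\<Sum>k=1..d. smult (b k) ((pderiv^^k) P))) z0"
  proof -
    have "{..d} = insert 0 {1..d}" by auto
    then have "(\<Sum>m\<le>d. (if m = 0 then 1 else b m) * poly ((pderiv^^m) P) z0)
       = poly P z0 + (\<Sum>m=1..d. (if m = 0 then 1 else b m) * poly ((pderiv^^m) P) z0)"
      by (simp add: sum.insert)
    also have "\<dots> = poly P z0 + (\<Sum>m=1..d. b m * poly ((pderiv^^m) P) z0)"
      by (intro arg_cong2[where f="(+)"] sum.cong) auto
    finally show ?thesis by (simp add: poly_sum)
  qed
  finally have "poly (apol d P h) z0 = 0" using N0 by simp
  then show False using G by simp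
qed

abbreviation cpoly :: "real poly \<Rightarrow> complex poly" where
  "cpoly \<equiv> map_poly complex_of_real"

lemma cpoly_add: "cpoly (p + q) = cpoly p + cpoly q"
  by (rule poly_eqI) (simp add: coeff_map_poly)

lemma cpoly_sum: "cpoly (sum f A) = (\<Sum>x\<in>A. cpoly (f x))"
  by (rule poly_eqI) (simp add: coeff_map_poly coeff_sum)

lemma cpoly_smult: "cpoly (smult c p) = smult (of_real c) (cpoly p)"
  by (rule poly_eqI) (simp add: coeff_map_poly)

lemma cpoly_pderiv: "cpoly (pderiv p) = pderiv (cpoly p)"
  by (rule poly_eqI) (simp add: coeff_map_poly coeff_pderiv)

lemma cpoly_higher_pderiv: "cpoly ((pderiv^^k) p) = (pderiv^^k) (cpoly p)"
  by (induction k) (simp_all add: cpoly_pderiv)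

lemma cpoly_monom: "cpoly (monom 1 d) = monom 1 d"
  by (simp add: map_poly_monom)

lemma cpoly_degree: "degree (cpoly p) = degree p"
  by (rule degree_map_poly) simp

lemma cpoly_cnj: "poly (cpoly p) (cnj z) = cnj (poly (cpoly p) z)"
proof -
  have "map_poly cnj (cpoly p) = cpoly p"
    by (rule poly_eqI) (simp add: coeff_map_poly)
  then show ?thesis using poly_map_poly_cnj[of "cpoly p" "cnj z"] by simp
qed

lemma hyperbolic_Im: "hyperbolic p \<longleftrightarrow> (\<forall>z. poly (cpoly p) z = 0 \<longrightarrow> Im z = 0)"
  by (simp add: hyperbolic_def complex_is_Real_iff)

lemma eval_Q:
  fixes b :: "nat \<Rightarrow> complex"
  shows "poly (monom 1 d + (\<Sum>k=1..d. smult (b k) ((pderiv^^k) (monom 1 d)))) w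
    = w^d + (\<Sum>k=1..d. b k * of_nat (\<Prod>i<k. d - i) * w^(d-k))"
  by (simp add: poly_sum higher_pderiv_monom1 poly_monom mult.assoc)

theorem theoremA:
  fixes d :: nat and a :: "nat \<Rightarrow> real"
  assumes "d \<ge> 1"
  shows "nuij_sequence d a \<longleftrightarrow>
    hyperbolic (monom 1 d + (\<Sum>k=1..d. smult (a k) ((pderiv ^^ k) (monom 1 d))))"
proof
  assume "nuij_sequence d a"
  moreover have "degree (monom (1::real) d) = d" by (simp add: degree_monom_eq)
  moreover have "hyperbolic (monom (1::real) d)"
    unfolding hyperbolic_Im cpoly_monom by (simp add: poly_monom)
  ultimately have "hyperbolic (nuij_poly d a (monom 1 d) 1)"
    unfolding nuij_sequence_def by blast
  then show "hyperbolic (monom 1 d + (\<Sum>k=1..d. smult (a k) ((pderiv ^^ k) (monom 1 d))))"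
    by (simp add: nuij_poly_def)
next
  assume hq: "hyperbolic (monom 1 d + (\<Sum>k=1..d. smult (a k) ((pderiv ^^ k) (monom 1 d))))"
  have hqc: "\<forall>z. poly (monom 1 d + (\<Sum>k=1..d. smult (complex_of_real (a k)) ((pderiv ^^ k) (monom 1 d)))) z = 0 \<longrightarrow> Im z = 0"
    using hq unfolding hyperbolic_Im
    by (simp add: cpoly_add cpoly_sum cpoly_smult cpoly_higher_pderiv cpoly_monom)
  show "nuij_sequence d a" unfolding nuij_sequence_def
  proof (intro allI impI)
    fix p :: "real poly" and s :: real
    assume dp: "degree p = d" and hp: "hyperbolic p"
    define P where "P = cpoly p"
    define b where "b k = complex_of_real (a k * s^k)" for k
    have dP: "degree P = d" using dp by (simp add: P_def cpoly_degree)
    have P0: "P \<noteq> 0" using dP assms by auto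
    have rP: "\<forall>w. poly P w = 0 \<longrightarrow> Im w = 0" using hp by (simp add: P_def hyperbolic_Im)
    have rQ: "\<forall>w. poly (monom 1 d + (\<Sum>k=1..d. smult (b k) ((pderiv^^k) (monom 1 d)))) w = 0 \<longrightarrow> Im w = 0"
    proof (cases "s = 0")
      case True
      then have "(\<Sum>k=1..d. smult (b k) ((pderiv^^k) (monom (1::complex) d))) = 0"
        by (intro sum.neutral) (auto simp: b_def)
      then show ?thesis by (simp add: poly_monom)
    next
      case False
      show ?thesis
      proof (intro allI impI)
        fix w assume w: "poly (monom 1 d + (\<Sum>k=1..d. smult (b k) ((pderiv^^k) (monom 1 d)))) w = 0"
        define sc where "sc = complex_of_real s"
        have sc0: "sc \<noteq> 0" using False by (simp add: sc_def)
        have "poly (monom 1 d + (\<Sum>k=1..d. smult (b k) ((pderiv^^k) (monom 1 d)))) w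
          = sc^d * poly (monom 1 d + (\<Sum>k=1..d. smult (complex_of_real (a k)) ((pderiv ^^ k) (monom 1 d)))) (w / sc)"
        proof -
          have e1: "w^d = sc^d * (w/sc)^d" using sc0 by (simp add: power_divide)
          have e2: "b k * of_nat (\<Prod>i<k. d - i) * w^(d-k) =
              sc^d * (complex_of_real (a k) * of_nat (\<Prod>i<k. d - i) * (w/sc)^(d-k))" if "k \<in> {1..d}" for k
          proof -
            have "sc^d = sc^k * sc^(d-k)" using that by (simp add: power_add[symmetric])
            then show ?thesis using sc0 by (simp add: b_def sc_def power_divide)
          qed
          show ?thesis unfolding eval_Q distrib_left sum_distrib_left
            by (rule arg_cong2[where f="(+)"], rule e1, rule sum.cong, rule refl, rule e2)
        qed
        then have "poly (monom 1 d + (\<Sum>k=1..d. smult (complex_of_real (a k)) ((pderiv ^^ k) (monom 1 d)))) (w / sc) = 0"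
          using w sc0 by simp
        then have "Im (w / sc) = 0" using hqc by blast
        then show "Im w = 0" using False by (simp add: sc_def Im_divide_of_real)
      qed
    qed
    have N: "cpoly (nuij_poly d a p s) = P + (\<Sum>k=1..d. smult (b k) ((pderiv^^k) P))"
      by (simp add: nuij_poly_def cpoly_add cpoly_sum cpoly_smult cpoly_higher_pderiv P_def b_def)
    have pos: "poly (cpoly (nuij_poly d a p s)) z \<noteq> 0" if "Im z > 0" for z
      unfolding N using core[OF P0 dP rP rQ that] .
    show "hyperbolic (nuij_poly d a p s)" unfolding hyperbolic_Im
    proof (intro allI impI)
      fix z assume z: "poly (cpoly (nuij_poly d a p s)) z = 0"
      show "Im z = 0"
      proof (rule ccontr)
        assume "Im z \<noteq> 0"
        then consider "Im z > 0" | "Im (cnj z) > 0" by fastforce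
        then show False
        proof cases
          case 1 then show False using pos z by blast
        next
          case 2 then show False using pos[OF 2] z cpoly_cnj by simp
        qed
      qed
    qed
  qed
qed

end
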